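(* Let $\alpha,\beta\in\mathbb{Z}[\mathrm{i}]$ with $|\alpha|,|\beta|>1$, and let $D_\alpha,D_\beta\subset\mathbb{Z}[\mathrm{i}]$ be finite sets containing $0$ such that every Gaussian integer has at least one $(\alpha,D_\alpha)$-expansion and at least one $(\beta,D_\beta)$-expansion. Let $(a_z)_{z\in\mathbb{Z}[\mathrm{i}]}$ be a configuration generated by a consistent DFAO $\mathcal{A}_\alpha=(S_\alpha,D_\alpha,\delta_\alpha,s_{0,\alpha},A,\tau_\alpha)$ in base $\alpha$ and by a consistent DFAO $\mathcal{A}_\beta=(S_\beta,D_\beta,\delta_\beta,s_{0,\beta},A,\tau_\beta)$ in base $\beta$. For $s\in S_\beta$ let $L_{\beta,s}=\{w\in D_\beta^*:\delta_\beta(s_{0,\beta},w)=s\}$, for $t\in S_\alpha$ let $L_{\alpha,t}=\{w\in D_\alpha^*:\delta_\alpha(s_{0,\alpha},w)=t\}$, and let $S_\infty=\{s\in S_\beta:[L_{\beta,s}]_\beta\text{ is infinite}\}$. If $\beta$ is not a root of an integer, then for every $s\in S_\infty$ there exists a state $t\in S_\alpha$ and three non-collinear Gaussian integers $x,y,z\in[L_{\beta,s}]_\beta\cap[L_{\alpha,t}]_\alpha$.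
   Context: For $\gamma\in\mathbb{Z}[\mathrm{i}]$ and a word $w=w_{n-1}\cdots w_0$, $[w]_\gamma=\sum_{j}w_j\gamma^j$, and $[L]_\gamma=\{[w]_\gamma:w\in L\}$; $w$ is a $(\gamma,D)$-expansion of $z$ if $[w]_\gamma=z$. A DFAO $(S,D,\delta,s_0,A,\tau)$ has finite state set $S$, transition map $\delta:S\times D\to S$ extended to words by $\delta(s,wa)=\delta(\delta(s,w),a)$, initial state $s_0$, output $\tau:S\to A$; it generates $(a_z)$ in base $\gamma$ and is consistent if $a_z=\tau(\delta(s_0,w))$ for every $w$ with $[w]_\gamma=z$. $\beta$ is a root of an integer if $\beta^n\in\mathbb{Z}$ for some $n\ge1$. *)

theory Defs
  imports "HOL-Analysis.Analysis"
begin

definition gauss_int :: "complex \<Rightarrow> bool" where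
  "gauss_int z \<longleftrightarrow> Re z \<in> \<int> \<and> Im z \<in> \<int>"

text \<open>A word w = w_{n-1} ... w_0 is the list [w_{n-1}, ..., w_0]
(most significant digit first); its value is sum_j w_j gamma^j (Horner).\<close>
definition word_val :: "complex \<Rightarrow> complex list \<Rightarrow> complex" where
  "word_val \<gamma> w = foldl (\<lambda>acc d. acc * \<gamma> + d) 0 w"

definition run :: "('s \<Rightarrow> complex \<Rightarrow> 's) \<Rightarrow> 's \<Rightarrow> complex list \<Rightarrow> 's" where
  "run \<delta> s w = foldl \<delta> s w"

definition dfao :: "'s set \<Rightarrow> complex set \<Rightarrow> ('s \<Rightarrow> complex \<Rightarrow> 's) \<Rightarrow> 's \<Rightarrow> 'o set \<Rightarrow> ('s \<Rightarrow> 'o) \<Rightarrow> bool" where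
  "dfao S D \<delta> s0 A \<tau> \<longleftrightarrow> finite S \<and> finite D \<and> s0 \<in> S \<and>
     (\<forall>s\<in>S. \<forall>d\<in>D. \<delta> s d \<in> S) \<and> (\<forall>s\<in>S. \<tau> s \<in> A)"

definition consistently_generates ::
  "complex \<Rightarrow> complex set \<Rightarrow> ('s \<Rightarrow> complex \<Rightarrow> 's) \<Rightarrow> 's \<Rightarrow> ('s \<Rightarrow> 'o) \<Rightarrow> (complex \<Rightarrow> 'o) \<Rightarrow> bool" where
  "consistently_generates \<gamma> D \<delta> s0 \<tau> a \<longleftrightarrow>
     (\<forall>w\<in>lists D. a (word_val \<gamma> w) = \<tau> (run \<delta> s0 w))"

definition all_expandable :: "complex \<Rightarrow> complex set \<Rightarrow> bool" where
  "all_expandable \<gamma> D \<longleftrightarrow> (\<forall>z. gauss_int z \<longrightarrow> (\<exists>w\<in>lists D. word_val \<gamma> w = z))"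

definition lang :: "complex set \<Rightarrow> ('s \<Rightarrow> complex \<Rightarrow> 's) \<Rightarrow> 's \<Rightarrow> 's \<Rightarrow> complex list set" where
  "lang D \<delta> s0 s = {w \<in> lists D. run \<delta> s0 w = s}"

definition root_of_integer :: "complex \<Rightarrow> bool" where
  "root_of_integer b \<longleftrightarrow> (\<exists>n::nat. n \<ge> 1 \<and> b ^ n \<in> \<int>)"

end

theory Submission imports Defs begin

lemma foldl_wv: fixes g :: complex shows "foldl (\<lambda>acc d. acc * g + d) a ys = a * g ^ length ys + foldl (\<lambda>acc d. acc * g + d) 0 ys"
proof (induction ys arbitrary: a)
  case Nil then show ?case by simp
next
  case (Cons y ys)
  have e1: "foldl (\<lambda>acc d. acc * g + d) a (y # ys) = (a*g+y) * g ^ length ys + foldl (\<lambda>acc d. acc * g + d) 0 ys"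
    using Cons.IH[of "a*g+y"] by (simp del: foldl_Cons add: foldl_Cons[of _ a])
  have e2: "foldl (\<lambda>acc d. acc * g + d) 0 (y # ys) = y * g ^ length ys + foldl (\<lambda>acc d. acc * g + d) 0 ys"
    using Cons.IH[of "y"] by (simp del: foldl_Cons add: foldl_Cons[of _ 0])
  show ?case unfolding e1 e2 by (simp add: algebra_simps)
qed

lemma word_val_append: "word_val g (xs @ ys) = word_val g xs * g ^ length ys + word_val g ys"
proof -
  have "word_val g (xs @ ys) = foldl (\<lambda>acc d. acc * g + d) (word_val g xs) ys"
    by (simp add: word_val_def)
  also have "... = word_val g xs * g ^ length ys + word_val g ys"
    by (rule foldl_wv[of g "word_val g xs" ys, folded word_val_def])
  finally show ?thesis .
qed

lemma run_append: "run \<delta> s (xs @ ys) = run \<delta> (run \<delta> s xs) ys"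
  by (simp add: run_def)

lemma run_in: "s \<in> S \<Longrightarrow> \<forall>s\<in>S. \<forall>d\<in>D. \<delta> s d \<in> S \<Longrightarrow> w \<in> lists D \<Longrightarrow> run \<delta> s w \<in> S"
  by (induction w arbitrary: s) (auto simp: run_def)

lemma run_pow: "run \<delta> q v = q \<Longrightarrow> run \<delta> q (concat (replicate k v)) = q"
  by (induction k) (auto simp: run_append run_def)

lemma gauss_add: "gauss_int a \<Longrightarrow> gauss_int b \<Longrightarrow> gauss_int (a + b)"
  by (auto simp: gauss_int_def)
lemma gauss_mult: "gauss_int a \<Longrightarrow> gauss_int b \<Longrightarrow> gauss_int (a * b)"
  by (auto simp: gauss_int_def)
lemma gauss_pow: "gauss_int a \<Longrightarrow> gauss_int (a ^ n)"
  by (induction n) (auto simp: gauss_mult, auto simp: gauss_int_def)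

lemma gauss_word: "gauss_int g \<Longrightarrow> D \<subseteq> {z. gauss_int z} \<Longrightarrow> w \<in> lists D \<Longrightarrow> gauss_int (word_val g w)"
proof (induction w rule: rev_induct)
  case Nil then show ?case by (simp add: word_val_def gauss_int_def)
next
  case (snoc x xs)
  have "word_val g (xs @ [x]) = word_val g xs * g + x" by (simp add: word_val_append word_val_def)
  then show ?case using snoc by (auto intro!: gauss_add gauss_mult)
qed

lemma gauss_real_int: "gauss_int z \<Longrightarrow> Im z = 0 \<Longrightarrow> z \<in> \<int>"
proof -
  assume a: "gauss_int z" "Im z = 0"
  then obtain i where "Re z = of_int i" by (auto simp: gauss_int_def elim!: Ints_cases)
  then have "z = of_int i" using a by (intro complex_eqI) auto
  then show ?thesis by simp
qed

lemma col_aux: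
  fixes a b c :: complex
  assumes "a \<noteq> b" "collinear {a,b,c}"
  shows "\<exists>r::real. c - a = of_real r * (b - a)"
proof -
  obtain u where H: "\<forall>x\<in>{a,b,c}. \<forall>y\<in>{a,b,c}. \<exists>t. x - y = t *\<^sub>R u"
    using assms(2) unfolding collinear_def by blast
  obtain t1 where t1: "b - a = t1 *\<^sub>R u" using H by blast
  obtain t2 where t2: "c - a = t2 *\<^sub>R u" using H by blast
  have "t1 \<noteq> 0" using t1 assms(1) by auto
  then have "c - a = of_real (t2/t1) * (b - a)"
    using t1 t2 by (simp add: scaleR_conv_of_real)
  then show ?thesis by blast
qed

lemma comb:
  fixes c :: "nat \<Rightarrow> 'a"
  assumes "finite T" "\<forall>k. c k \<in> T"
  shows "\<exists>k k' n. k < k' \<and> 0 < n \<and> c (k+n) = c k \<and> c k' = c k \<and> c (k'+n) = c k"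
proof -
  define N where "N = card T"
  have blk: "\<exists>a d. j*(N+1) \<le> a \<and> 0 < d \<and> a + d \<le> j*(N+1)+N \<and> c (a+d) = c a" for j
  proof -
    define B where "B = {j*(N+1)..j*(N+1)+N}"
    have "card (c ` B) \<le> N" unfolding N_def using assms by (intro card_mono) auto
    moreover have "card B = N + 1" unfolding B_def by simp
    ultimately have "\<not> inj_on c B" by (intro pigeonhole) auto
    then obtain x y where xy: "x \<in> B" "y \<in> B" "x \<noteq> y" "c x = c y" unfolding inj_on_def by blast
    show ?thesis
    proof (cases "x < y")
      case True
      then show ?thesis using xy by (intro exI[of _ x] exI[of _ "y - x"]) (auto simp: B_def)
    next
      case False
      then have "y < x" using xy by simp
      then show ?thesis using xy by (intro exI[of _ y] exI[of _ "x - y"]) (auto simp: B_def)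
    qed
  qed
  then have "\<forall>j. \<exists>p. j*(N+1) \<le> fst p \<and> 0 < snd p \<and> fst p + snd p \<le> j*(N+1)+N \<and> c (fst p + snd p) = c (fst p)"
    by force
  then obtain pp where pp: "\<forall>j. j*(N+1) \<le> fst (pp j) \<and> 0 < snd (pp j) \<and> fst (pp j) + snd (pp j) \<le> j*(N+1)+N \<and> c (fst (pp j) + snd (pp j)) = c (fst (pp j))"
    by (rule choice[THEN exE]) blast
  define aa where "aa j = fst (pp j)" for j
  define dd where "dd j = snd (pp j)" for j
  have ad: "\<And>j. j*(N+1) \<le> aa j \<and> 0 < dd j \<and> aa j + dd j \<le> j*(N+1)+N \<and> c (aa j + dd j) = c (aa j)"
    using pp unfolding aa_def dd_def by blast
  define h where "h j = (c (aa j), aa j - j*(N+1), dd j)" for j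
  have "range h \<subseteq> T \<times> {..N} \<times> {..N}" proof
    fix x assume "x \<in> range h"
    then obtain j where x: "x = h j" by blast
    have "aa j - j*(N+1) \<le> N" "dd j \<le> N" using ad[of j] by linarith+
    then show "x \<in> T \<times> {..N} \<times> {..N}" using x assms(2) by (simp add: h_def)
  qed
  then have "finite (range h)" using assms(1) by (meson finite_SigmaI finite_atMost finite_subset)
  then have "\<not> inj h" using finite_imageD[of h UNIV] infinite_UNIV_nat by blast
  then obtain j j' where jj: "j \<noteq> j'" "h j = h j'" unfolding inj_on_def by blast
  have main: "\<exists>k k' n. k < k' \<and> 0 < n \<and> c (k+n) = c k \<and> c k' = c k \<and> c (k'+n) = c k"
    if "j < j'" "h j = h j'" for j j'
  proof -
    have "j*(N+1) + N < j'*(N+1)"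
    proof -
      have "Suc j * (N+1) \<le> j' * (N+1)" using that(1) by (intro mult_le_mono1) simp
      then show ?thesis by simp
    qed
    then have "aa j < aa j'" using ad[of j] ad[of j'] by linarith
    moreover have "dd j = dd j'" "c (aa j) = c (aa j')" using that(2) by (auto simp: h_def)
    ultimately show ?thesis using ad[of j] ad[of j'] by (intro exI[of _ "aa j"] exI[of _ "aa j'"] exI[of _ "dd j"]) auto
  qed
  show ?thesis
  proof (cases "j < j'")
    case True then show ?thesis using main jj by blast
  next
    case False then have "j' < j" using jj by simp
    then show ?thesis using main[OF _ jj(2)[symmetric]] by blast
  qed
qed


lemma concat_rep_Suc: "concat (replicate (Suc k) v) = concat (replicate k v) @ v"
  by (induction k) auto

lemma geo_ne0:
  fixes g :: complex assumes "cmod g > 1" "n > 0"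
  shows "(\<Sum>i<n. g^i) \<noteq> 0"
proof
  assume h: "(\<Sum>i<n. g^i) = 0"
  have "(g - 1) * (\<Sum>i<n. g^i) = g^n - 1" for n
    by (induction n) (auto simp: algebra_simps)
  then have "g^n = 1" using h by (metis mult_zero_right right_minus_eq)
  moreover have "cmod (g^n) > 1" using assms by (simp add: norm_power one_less_power)
  ultimately show False by simp
qed

lemma pump:
  fixes \<beta> :: complex and u v w :: "complex list"
  defines "P \<equiv> \<lambda>k. word_val \<beta> (u @ concat (replicate k v) @ w)"
  defines "\<gamma> \<equiv> \<beta> ^ length v"
  shows "P n - P 0 = (P 1 - P 0) * (\<Sum>i<n. \<gamma>^i)"
    and "P (j + n) - P j = \<gamma>^j * (P n - P 0)"
proof -
  define G where "G k = word_val \<beta> (u @ concat (replicate k v))" for k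
  have PG: "P k = G k * \<beta> ^ length w + word_val \<beta> w" for k
    unfolding P_def G_def by (simp add: word_val_append[of _ "u @ _" w, simplified])
  have GS: "G (Suc k) = G k * \<gamma> + word_val \<beta> v" for k
    unfolding G_def \<gamma>_def concat_rep_Suc
    by (simp add: word_val_append[of _ "u @ _" v, simplified])
  have GD: "G (Suc k) - G k = \<gamma>^k * (G 1 - G 0)" for k
  proof (induction k)
    case 0 then show ?case by simp
  next
    case (Suc k)
    have "G (Suc (Suc k)) - G (Suc k) = \<gamma> * (G (Suc k) - G k)" using GS[of "Suc k"] GS[of k]
      by (simp add: algebra_simps)
    then show ?case using Suc by simp
  qed
  have PD: "P (Suc k) - P k = \<gamma>^k * (P 1 - P 0)" for k
  proof -
    have "P (Suc k) - P k = (G (Suc k) - G k) * \<beta> ^ length w" unfolding PG by (simp add: algebra_simps)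
    also have "... = \<gamma>^k * ((G 1 - G 0) * \<beta> ^ length w)" using GD[of k] by simp
    also have "(G 1 - G 0) * \<beta> ^ length w = P 1 - P 0" unfolding PG by (simp add: algebra_simps)
    finally show ?thesis .
  qed
  show "P n - P 0 = (P 1 - P 0) * (\<Sum>i<n. \<gamma>^i)"
  proof (induction n)
    case 0 then show ?case by simp
  next
    case (Suc n)
    have "P (Suc n) - P 0 = (P (Suc n) - P n) + (P n - P 0)" by simp
    also have "... = \<gamma>^n * (P 1 - P 0) + (P 1 - P 0) * (\<Sum>i<n. \<gamma>^i)" unfolding Suc PD[of n] ..
    finally show ?case by (simp add: algebra_simps)
  qed
  show "P (j + n) - P j = \<gamma>^j * (P n - P 0)"
  proof (induction n)
    case 0 then show ?case by simp
  next
    case (Suc n)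
    have "P (j + Suc n) - P j = (P (Suc (j + n)) - P (j+n)) + (P (j+n) - P j)" by simp
    also have "... = \<gamma>^(j+n) * (P 1 - P 0) + \<gamma>^j * (P n - P 0)" unfolding Suc PD[of "j+n"] ..
    also have "... = \<gamma>^j * ((P (Suc n) - P n) + (P n - P 0))" unfolding PD[of n] by (simp add: algebra_simps power_add)
    finally show ?case by simp
  qed
qed

theorem lemma3p4:
  fixes \<alpha> \<beta> :: complex
    and D\<alpha> D\<beta> :: "complex set"
    and S\<alpha> :: "'sa set" and \<delta>\<alpha> :: "'sa \<Rightarrow> complex \<Rightarrow> 'sa" and s0\<alpha> :: 'sa and \<tau>\<alpha> :: "'sa \<Rightarrow> 'o"
    and S\<beta> :: "'sb set" and \<delta>\<beta> :: "'sb \<Rightarrow> complex \<Rightarrow> 'sb" and s0\<beta> :: 'sb and \<tau>\<beta> :: "'sb \<Rightarrow> 'o"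
    and A :: "'o set" and a :: "complex \<Rightarrow> 'o"
  assumes "gauss_int \<alpha>" "gauss_int \<beta>" "cmod \<alpha> > 1" "cmod \<beta> > 1"
    and "finite D\<alpha>" "finite D\<beta>" "D\<alpha> \<subseteq> {z. gauss_int z}" "D\<beta> \<subseteq> {z. gauss_int z}"
    and "0 \<in> D\<alpha>" "0 \<in> D\<beta>"
    and "all_expandable \<alpha> D\<alpha>" "all_expandable \<beta> D\<beta>"
    and "dfao S\<alpha> D\<alpha> \<delta>\<alpha> s0\<alpha> A \<tau>\<alpha>" "dfao S\<beta> D\<beta> \<delta>\<beta> s0\<beta> A \<tau>\<beta>"
    and "consistently_generates \<alpha> D\<alpha> \<delta>\<alpha> s0\<alpha> \<tau>\<alpha> a"
    and "consistently_generates \<beta> D\<beta> \<delta>\<beta> s0\<beta> \<tau>\<beta> a"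
    and "\<not> root_of_integer \<beta>"
  shows "\<forall>s\<in>{s \<in> S\<beta>. infinite (word_val \<beta> ` lang D\<beta> \<delta>\<beta> s0\<beta> s)}.
           \<exists>t\<in>S\<alpha>. \<exists>x y z.
             x \<in> word_val \<beta> ` lang D\<beta> \<delta>\<beta> s0\<beta> s \<inter> word_val \<alpha> ` lang D\<alpha> \<delta>\<alpha> s0\<alpha> t \<and>
             y \<in> word_val \<beta> ` lang D\<beta> \<delta>\<beta> s0\<beta> s \<inter> word_val \<alpha> ` lang D\<alpha> \<delta>\<alpha> s0\<alpha> t \<and>
             z \<in> word_val \<beta> ` lang D\<beta> \<delta>\<beta> s0\<beta> s \<inter> word_val \<alpha> ` lang D\<alpha> \<delta>\<alpha> s0\<alpha> t \<and>
             \<not> collinear {x, y, z}"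
proof (intro ballI)
  fix s assume "s \<in> {s \<in> S\<beta>. infinite (word_val \<beta> ` lang D\<beta> \<delta>\<beta> s0\<beta> s)}"
  then have sS: "s \<in> S\<beta>" and inf: "infinite (word_val \<beta> ` lang D\<beta> \<delta>\<beta> s0\<beta> s)" by auto
  have dfb: "finite S\<beta>" "s0\<beta> \<in> S\<beta>" "\<forall>s\<in>S\<beta>. \<forall>d\<in>D\<beta>. \<delta>\<beta> s d \<in> S\<beta>"
    using assms(14) by (auto simp: dfao_def)
  have dfa: "finite S\<alpha>" "s0\<alpha> \<in> S\<alpha>" "\<forall>s\<in>S\<alpha>. \<forall>d\<in>D\<alpha>. \<delta>\<alpha> s d \<in> S\<alpha>"
    using assms(13) by (auto simp: dfao_def)
  define Sh where "Sh = {w. set w \<subseteq> D\<beta> \<and> length w \<le> card S\<beta>}"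
  have "finite (word_val \<beta> ` Sh)" using finite_lists_length_le[OF assms(6)] Sh_def by simp
  then obtain z where z: "z \<in> word_val \<beta> ` lang D\<beta> \<delta>\<beta> s0\<beta> s" "z \<notin> word_val \<beta> ` Sh"
    using inf by (metis finite_subset subsetI)
  then obtain p0 where "p0 \<in> lang D\<beta> \<delta>\<beta> s0\<beta> s \<and> word_val \<beta> p0 = z" by blast
  then obtain p where p: "p \<in> lang D\<beta> \<delta>\<beta> s0\<beta> s \<and> word_val \<beta> p = z"
    and pmin: "\<forall>p'. p' \<in> lang D\<beta> \<delta>\<beta> s0\<beta> s \<and> word_val \<beta> p' = z \<longrightarrow> length p \<le> length p'"
    using ex_has_least_nat[of "\<lambda>p. p \<in> lang D\<beta> \<delta>\<beta> s0\<beta> s \<and> word_val \<beta> p = z" p0 length] by blast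
  have pl: "p \<in> lists D\<beta>" "run \<delta>\<beta> s0\<beta> p = s" using p by (auto simp: lang_def)
  have plen: "card S\<beta> < length p"
  proof (rule ccontr)
    assume "\<not> card S\<beta> < length p"
    then have "p \<in> Sh" using pl unfolding Sh_def by (auto simp: in_lists_conv_set)
    then show False using z(2) p by blast
  qed
  define st where "st i = run \<delta>\<beta> s0\<beta> (take i p)" for i
  have "st ` {0..card S\<beta>} \<subseteq> S\<beta>"
  proof
    fix x assume "x \<in> st ` {0..card S\<beta>}"
    then obtain i where x: "x = st i" by blast
    have "take i p \<in> lists D\<beta>" using pl(1) set_take_subset[of i p] by (auto simp: in_lists_conv_set)
    then show "x \<in> S\<beta>" unfolding x st_def using run_in[OF dfb(2) dfb(3)] by blast
  qed
  then have "card (st ` {0..card S\<beta>}) \<le> card S\<beta>" using dfb(1) by (intro card_mono)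
  then have "\<not> inj_on st {0..card S\<beta>}" by (intro pigeonhole) simp
  then obtain i0 j0 where ij0: "i0 \<in> {0..card S\<beta>}" "j0 \<in> {0..card S\<beta>}" "i0 \<noteq> j0" "st i0 = st j0"
    unfolding inj_on_def by blast
  obtain i j where ij: "i < j" "j \<le> card S\<beta>" "st i = st j"
  proof (cases "i0 < j0")
    case True then show ?thesis using that ij0 by auto
  next
    case False then show ?thesis using that[of j0 i0] ij0 by auto
  qed
  define u where "u = take i p"
  define v where "v = take (j-i) (drop i p)"
  define w where "w = drop j p"
  have uv: "take j p = u @ v" unfolding u_def v_def using take_add[of i "j-i" p] ij(1) by simp
  have puvw: "p = u @ v @ w" using uv unfolding w_def by (metis append_assoc append_take_drop_id)
  have vlen: "length v = j - i" unfolding v_def using ij plen by simp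
  then have vpos: "length v > 0" using ij by simp
  have uvwl: "u \<in> lists D\<beta>" "v \<in> lists D\<beta>" "w \<in> lists D\<beta>" using pl(1) puvw by (metis append_in_lists_conv)+
  define q where "q = st i"
  have ru: "run \<delta>\<beta> s0\<beta> u = q" unfolding q_def st_def u_def ..
  have rv: "run \<delta>\<beta> q v = q" using ij(3) unfolding q_def st_def uv by (simp add: run_append u_def)
  have rw: "run \<delta>\<beta> q w = s" using pl(2) unfolding puvw
    by (metis rv ru run_append append_assoc)
  define P where "P k = word_val \<beta> (u @ concat (replicate k v) @ w)" for k
  have PX: "P k \<in> word_val \<beta> ` lang D\<beta> \<delta>\<beta> s0\<beta> s" for k
  proof -
    have "u @ concat (replicate k v) @ w \<in> lists D\<beta>" using uvwl by (auto simp: in_lists_conv_set)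
    moreover have "run \<delta>\<beta> s0\<beta> (u @ concat (replicate k v) @ w) = s"
      by (simp add: run_append ru run_pow[OF rv] rw)
    ultimately show ?thesis unfolding P_def lang_def by blast
  qed
  have P1: "P 1 = z" using p puvw unfolding P_def by simp
  have P0: "P 0 \<noteq> z"
  proof
    assume "P 0 = z"
    moreover have "u @ w \<in> lang D\<beta> \<delta>\<beta> s0\<beta> s" using uvwl unfolding lang_def
      by (simp add: run_append ru rw)
    moreover have "word_val \<beta> (u @ w) = P 0" unfolding P_def by simp
    ultimately have "length p \<le> length (u @ w)" using pmin by metis
    moreover have "length p = length u + length v + length w" using puvw by (metis length_append add.assoc)
    ultimately show False using vpos by simp
  qed
  define \<gamma> where "\<gamma> = \<beta> ^ length v"
  have gam: "cmod \<gamma> > 1" unfolding \<gamma>_def using assms(4) vpos by (simp add: norm_power one_less_power)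
  then have gam0: "\<gamma> \<noteq> 0" by auto
  have F: "P n - P 0 \<noteq> 0" if "n > 0" for n
  proof -
    have "P n - P 0 = (P 1 - P 0) * (\<Sum>i<n. \<gamma>^i)" unfolding P_def \<gamma>_def by (rule pump(1))
    moreover have "P 1 - P 0 \<noteq> 0" using P0 P1 by simp
    ultimately show ?thesis using geo_ne0[OF gam that] by simp
  qed
  have Dif: "P (j + n) - P j = \<gamma>^j * (P n - P 0)" for j n
    unfolding P_def \<gamma>_def by (rule pump(2))
  have gP: "gauss_int (P k)" for k
  proof -
    have "u @ concat (replicate k v) @ w \<in> lists D\<beta>" using uvwl by (auto simp: in_lists_conv_set)
    then show ?thesis unfolding P_def using gauss_word[OF assms(2) assms(8)] by blast
  qed
  have exW: "\<exists>w. w \<in> lists D\<alpha> \<and> word_val \<alpha> w = P k" for k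
    using assms(11) gP unfolding all_expandable_def by blast
  define W where "W k = (SOME w. w \<in> lists D\<alpha> \<and> word_val \<alpha> w = P k)" for k
  have W: "W k \<in> lists D\<alpha> \<and> word_val \<alpha> (W k) = P k" for k
    unfolding W_def using someI_ex[OF exW] .
  define col where "col k = run \<delta>\<alpha> s0\<alpha> (W k)" for k
  have colS: "\<forall>k. col k \<in> S\<alpha>" unfolding col_def using W run_in[OF dfa(2) dfa(3)] by blast
  have Pcol: "P k \<in> word_val \<alpha> ` lang D\<alpha> \<delta>\<alpha> s0\<alpha> (col k)" for k
    using W[of k] unfolding lang_def col_def by force
  obtain k k' n where kk: "k < k'" "0 < n" "col (k+n) = col k" "col k' = col k" "col (k'+n) = col k"
    using comb[OF dfa(1) colS] by blast
  have nc: "\<not> collinear {P k, P (k+n), P k'} \<or> \<not> collinear {P k, P (k+n), P (k'+n)}"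
  proof (rule ccontr)
    assume "\<not> ?thesis"
    then have c1: "collinear {P k, P (k+n), P k'}" and c2: "collinear {P k, P (k+n), P (k'+n)}" by auto
    have ne: "P k \<noteq> P (k+n)" using Dif[of k n] F[OF kk(2)] gam0 by auto
    obtain r1 where r1: "P k' - P k = of_real r1 * (P (k+n) - P k)" using col_aux[OF ne c1] by blast
    obtain r2 where r2: "P (k'+n) - P k = of_real r2 * (P (k+n) - P k)" using col_aux[OF ne c2] by blast
    have "P (k'+n) - P k' = of_real (r2 - r1) * (P (k+n) - P k)"
    proof -
      have "P (k'+n) - P k' = (P (k'+n) - P k) - (P k' - P k)" by simp
      also have "... = of_real r2 * (P (k+n) - P k) - of_real r1 * (P (k+n) - P k)" unfolding r1 r2 ..
      also have "... = of_real (r2 - r1) * (P (k+n) - P k)" by (simp add: of_real_diff left_diff_distrib)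
      finally show ?thesis .
    qed
    then have "\<gamma>^k' * (P n - P 0) = of_real (r2 - r1) * (\<gamma>^k * (P n - P 0))"
      unfolding Dif by simp
    then have e: "\<gamma>^k' = of_real (r2 - r1) * \<gamma>^k" using F[OF kk(2)] by simp
    have "\<gamma>^k' = \<gamma>^k * \<gamma>^(k'-k)" using kk(1) by (simp add: power_add[symmetric])
    then have "\<gamma>^(k'-k) = of_real (r2 - r1)" using e gam0 by (simp add: mult.commute)
    then have im: "Im (\<beta> ^ (length v * (k'-k))) = 0" unfolding \<gamma>_def power_mult by simp
    have "\<beta> ^ (length v * (k'-k)) \<in> \<int>" using gauss_real_int[OF gauss_pow[OF assms(2)] im] .
    moreover have "length v * (k'-k) \<ge> 1" using vpos kk(1) by (simp add: Suc_le_eq)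
    ultimately have "root_of_integer \<beta>" unfolding root_of_integer_def by blast
    then show False using assms(17) by blast
  qed
  have mem: "P m \<in> word_val \<beta> ` lang D\<beta> \<delta>\<beta> s0\<beta> s \<inter> word_val \<alpha> ` lang D\<alpha> \<delta>\<alpha> s0\<alpha> (col k)"
    if "col m = col k" for m
    using PX[of m] Pcol[of m] that by simp
  show "\<exists>t\<in>S\<alpha>. \<exists>x y z.
             x \<in> word_val \<beta> ` lang D\<beta> \<delta>\<beta> s0\<beta> s \<inter> word_val \<alpha> ` lang D\<alpha> \<delta>\<alpha> s0\<alpha> t \<and>
             y \<in> word_val \<beta> ` lang D\<beta> \<delta>\<beta> s0\<beta> s \<inter> word_val \<alpha> ` lang D\<alpha> \<delta>\<alpha> s0\<alpha> t \<and>
             z \<in> word_val \<beta> ` lang D\<beta> \<delta>\<beta> s0\<beta> s \<inter> word_val \<alpha> ` lang D\<alpha> \<delta>\<alpha> s0\<alpha> t \<and>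
             \<not> collinear {x, y, z}"
    using nc mem[of k] mem[OF kk(3)] mem[OF kk(4)] mem[OF kk(5)] colS by blast
qed

end
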